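(* Let $\{\sigma^{(n)}_{AB}\}_{n\ge1}$ be a sequence of density matrices on a fixed finite-dimensional space $\mathcal H_A\otimes\mathcal H_B$ such that $\lim_{n\to\infty}\sigma^{(n)}_{AB}=\rho_{AB}$ and $\lim_{n\to\infty}\mu(\sigma^{(n)}_{AB})=\lambda$. Then $\mu(\rho_{AB})\leq\lambda$. In particular, if $\lambda=0$ then $\rho_{AB}=\rho_A\otimes\rho_B$ is a product state.
   Context: For a bipartite density matrix $\rho_{AB}$ on $\mathcal H_A\otimes\mathcal H_B$ with reduced states $\rho_A=\mathrm{tr}_B\rho_{AB}$, $\rho_B=\mathrm{tr}_A\rho_{AB}$, the maximal correlation is $\mu(\rho_{AB})=\max |\mathrm{tr}(\rho_{AB}\, X_A\otimes Y_B^\dagger)|$, the maximum over $X_A\in\mathbf L(\mathcal H_A)$, $Y_B\in\mathbf L(\mathcal H_B)$ subject to $\mathrm{tr}(\rho_A X_A)=\mathrm{tr}(\rho_B Y_B)=0$ and $\mathrm{tr}(\rho_A X_AX_A^\dagger)=\mathrm{tr}(\rho_B Y_BY_B^\dagger)=1$. *)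

theory Defs
  imports "HOL-Analysis.Analysis"
begin

text \<open>Operators on a finite-dimensional Hilbert space with orthonormal basis indexed by
  a finite type 'n are represented as complex matrices of type complex^'n^'n.
  The bipartite space H_A (x) H_B is indexed by the product type 'a \<times> 'b.\<close>

definition mtrace :: "complex^'n^'n \<Rightarrow> complex" where
  "mtrace M = (\<Sum>i\<in>UNIV. M $ i $ i)"

definition madj :: "complex^'n^'n \<Rightarrow> complex^'n^'n" where
  "madj M = (\<chi> i j. cnj (M $ j $ i))"

definition mtensor :: "complex^'a^'a \<Rightarrow> complex^'b^'b \<Rightarrow> complex^('a::finite\<times>'b::finite)^('a\<times>'b)" where
  "mtensor X Y = (\<chi> p q. X $ fst p $ fst q * Y $ snd p $ snd q)"

text \<open>Partial traces: ptrB gives rho_A = tr_B rho_AB, ptrA gives rho_B = tr_A rho_AB.\<close>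
definition ptrB :: "complex^('a::finite\<times>'b::finite)^('a\<times>'b) \<Rightarrow> complex^'a^'a" where
  "ptrB R = (\<chi> a a'. \<Sum>b\<in>UNIV. R $ (a,b) $ (a',b))"

definition ptrA :: "complex^('a::finite\<times>'b::finite)^('a\<times>'b) \<Rightarrow> complex^'b^'b" where
  "ptrA R = (\<chi> b b'. \<Sum>a\<in>UNIV. R $ (a,b) $ (a,b'))"

definition density :: "complex^'n^'n \<Rightarrow> bool" where
  "density R \<longleftrightarrow> madj R = R
     \<and> (\<forall>v::complex^'n. let q = (\<Sum>i\<in>UNIV. \<Sum>j\<in>UNIV. cnj (v $ i) * R $ i $ j * v $ j)
                         in Im q = 0 \<and> Re q \<ge> 0)
     \<and> mtrace R = 1"

text \<open>Maximal correlation. The paper's max is rendered as a supremum; 0 is adjoined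
  so that the value is 0 when the feasible set is empty (all values are \<ge> 0 anyway).\<close>
definition maxcorr :: "complex^('a::finite\<times>'b::finite)^('a\<times>'b) \<Rightarrow> real" where
  "maxcorr R = Sup ({cmod (mtrace (R ** mtensor X (madj Y))) | X Y.
        mtrace (ptrB R ** X) = 0 \<and> mtrace (ptrA R ** Y) = 0 \<and>
        mtrace (ptrB R ** (X ** madj X)) = 1 \<and> mtrace (ptrA R ** (Y ** madj Y)) = 1} \<union> {0})"

end

theory Submission
  imports Defs
begin


definition bf :: "complex^'n^'n \<Rightarrow> ('n::finite \<Rightarrow> complex) \<Rightarrow> ('n \<Rightarrow> complex) \<Rightarrow> complex" where
  "bf R v w = (\<Sum>i\<in>UNIV. \<Sum>j\<in>UNIV. cnj (w i) * R$i$j * v j)"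

lemma bf_psd:
  assumes "density R"
  shows "Im (bf R f f) = 0 \<and> Re (bf R f f) \<ge> 0"
proof -
  from assms have "let q = (\<Sum>i\<in>UNIV. \<Sum>j\<in>UNIV. cnj ((\<chi> i. f i) $ i) * R $ i $ j * (\<chi> i. f i) $ j)
                         in Im q = 0 \<and> Re q \<ge> 0" unfolding density_def by blast
  then show ?thesis by (simp add: bf_def Let_def)
qed

lemma bf_herm:
  assumes "density R"
  shows "bf R w v = cnj (bf R v w)"
proof -
  from assms have h: "\<And>i j. cnj (R$i$j) = R$j$i"
    unfolding density_def madj_def by (metis vec_lambda_beta)
  have "bf R w v = (\<Sum>i\<in>UNIV. \<Sum>j\<in>UNIV. cnj (v i) * R$i$j * w j)" by (simp add: bf_def)
  also have "\<dots> = (\<Sum>j\<in>UNIV. \<Sum>i\<in>UNIV. cnj (v i) * R$i$j * w j)" by (rule sum.swap)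
  also have "\<dots> = cnj (bf R v w)" by (simp add: bf_def h cnj_sum mult.commute mult.left_commute)
  finally show ?thesis .
qed

lemma bf_expand:
  "bf R (\<lambda>i. v i - u * w i) (\<lambda>i. v i - u * w i) =
     bf R v v - cnj u * bf R v w - u * bf R w v + u * cnj u * bf R w w"
proof -
  have pt: "\<And>i j. cnj (v i - u * w i) * R$i$j * (v j - u * w j) =
     cnj (v i) * R$i$j * v j - cnj u * (cnj (w i) * R$i$j * v j) - u * (cnj (v i) * R$i$j * w j)
     + u * cnj u * (cnj (w i) * R$i$j * w j)"
    by (simp add: algebra_simps)
  show ?thesis unfolding bf_def pt
    by (simp add: sum.distrib sum_subtractf sum_distrib_left)
qed

lemma bf_amgm:
  assumes "density R"
  shows "2 * cmod (bf R v w) \<le> Re (bf R v v) + Re (bf R w w)"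
proof -
  define c where "c = bf R v w"
  define u where "u = (if c = 0 then 1 else c / of_real (cmod c))"
  have cc: "cnj c * c = of_real ((cmod c)^2)"
    by (metis complex_norm_square mult.commute of_real_power)
  have u1: "u * cnj u = 1" and uc0: "cnj u * c = of_real (cmod c)"
  proof -
    show "u * cnj u = 1"
    proof (cases "c = 0")
      case False
      then have "cmod c \<noteq> 0" by simp
      then show ?thesis using False cc unfolding u_def
        by (simp add: field_simps power2_eq_square mult.commute)
    qed (simp add: u_def)
    show "cnj u * c = of_real (cmod c)"
    proof (cases "c = 0")
      case False
      then have "cmod c \<noteq> 0" by simp
      then show ?thesis using False cc unfolding u_def
        by (simp add: field_simps power2_eq_square)
    qed (simp add: u_def)
  qed
  have uc: "Re (cnj u * c) = cmod c" "Re (u * cnj c) = cmod c"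
    proof -
    have "u * cnj c = cnj (cnj u * c)" by simp
    also have "\<dots> = of_real (cmod c)" using uc0 by simp
    finally show "Re (cnj u * c) = cmod c" "Re (u * cnj c) = cmod c" using uc0 by simp_all
  qed
  have "0 \<le> Re (bf R (\<lambda>i. v i - u * w i) (\<lambda>i. v i - u * w i))"
    using bf_psd[OF assms] by blast
  also have "\<dots> = Re (bf R v v) - 2 * cmod c + Re (bf R w w)"
    unfolding bf_expand bf_herm[OF assms, of w v] c_def[symmetric] using uc u1 by simp
  finally show ?thesis unfolding c_def by simp
qed


definition fX :: "complex^'a^'a \<Rightarrow> ('a::finite \<times> 'b::finite) \<Rightarrow> ('a \<times> 'b) \<Rightarrow> complex" where
  "fX X k q = X $ fst q $ fst k * (if snd k = snd q then 1 else 0)"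
definition gY :: "complex^'b^'b \<Rightarrow> ('a::finite \<times> 'b::finite) \<Rightarrow> ('a \<times> 'b) \<Rightarrow> complex" where
  "gY Y k p = (if fst k = fst p then 1 else 0) * Y $ snd p $ snd k"

lemma sum_pair: "(\<Sum>k\<in>(UNIV::('a::finite\<times>'b::finite) set). h k) = (\<Sum>a\<in>UNIV. \<Sum>b\<in>UNIV. h (a,b))"
proof -
  have "(\<Sum>a\<in>UNIV. \<Sum>b\<in>UNIV. h (a,b)) = (\<Sum>(a,b)\<in>UNIV\<times>UNIV. h (a,b))"
    by (rule sum.cartesian_product)
  also have "\<dots> = (\<Sum>k\<in>UNIV. h k)" by (simp add: UNIV_Times_UNIV split_def)
  finally show ?thesis by (rule sym)
qed

lemma mtrace_mult: "mtrace (A ** B) = (\<Sum>i\<in>UNIV. \<Sum>j\<in>UNIV. A$i$j * B$j$i)"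
  by (simp add: mtrace_def matrix_matrix_mult_def)

lemma I1: "mtrace (R ** mtensor (X::complex^'a^'a) (madj (Y::complex^'b^'b))) =
   (\<Sum>k\<in>UNIV. bf R (fX X k) (gY Y k))"
proof -
  have inner: "(\<Sum>k\<in>UNIV. cnj (gY Y k p) * R$p$q * fX X k q) = R$p$q * (X$fst q$fst p * cnj (Y$snd p$snd q))"
    for p q :: "'a::finite \<times> 'b::finite"
  proof -
    have "\<And>k. cnj (gY Y k p) * R$p$q * fX X k q = (if k = (fst p, snd q) then R$p$q * (X$fst q$fst p * cnj (Y$snd p$snd q)) else 0)"
      by (auto simp: gY_def fX_def)
    then show ?thesis by (simp add: sum.delta')
  qed
  have "(\<Sum>k\<in>UNIV. bf R (fX X k) (gY Y k)) = (\<Sum>k\<in>UNIV. \<Sum>p\<in>UNIV. \<Sum>q\<in>UNIV. cnj (gY Y k p) * R$p$q * fX X k q)"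
    by (simp add: bf_def)
  also have "\<dots> = (\<Sum>p\<in>UNIV. \<Sum>k\<in>UNIV. \<Sum>q\<in>UNIV. cnj (gY Y k p) * R$p$q * fX X k q)"
    by (rule sum.swap)
  also have "\<dots> = (\<Sum>p\<in>UNIV. \<Sum>q\<in>UNIV. \<Sum>k\<in>UNIV. cnj (gY Y k p) * R$p$q * fX X k q)"
    by (rule sum.cong[OF refl], rule sum.swap)
  also have "\<dots> = (\<Sum>p\<in>UNIV. \<Sum>q\<in>UNIV. R$p$q * (X$fst q$fst p * cnj (Y$snd p$snd q)))"
    by (simp only: inner)
  also have "\<dots> = mtrace (R ** mtensor X (madj Y))"
    unfolding mtrace_mult mtensor_def madj_def by simp
  finally show ?thesis by (rule sym)
qed

lemma I2: "mtrace (ptrB R ** ((X::complex^'a^'a) ** madj X)) =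
   (\<Sum>k\<in>(UNIV::('a::finite\<times>'b::finite) set). bf R (fX X k) (fX X k))"
proof -
  define S where "S a a' = (\<Sum>k1\<in>UNIV. cnj (X$a$k1) * X$a'$k1)" for a a'
  have inner: "(\<Sum>k\<in>UNIV. cnj (fX X k p) * R$p$q * fX X k q) = (if snd p = snd q then R$p$q * S (fst p) (fst q) else 0)"
    for p q :: "'a \<times> 'b"
  proof -
    have pt: "\<And>k1 k2. cnj (fX X (k1,k2) p) * R$p$q * fX X (k1,k2) q =
       (if k2 = snd p then (if snd p = snd q then R$p$q * (cnj (X$fst p$k1) * X$fst q$k1) else 0) else 0)"
      by (auto simp: fX_def)
    have "(\<Sum>k\<in>UNIV. cnj (fX X k p) * R$p$q * fX X k q) =
       (\<Sum>k1\<in>UNIV. \<Sum>k2\<in>UNIV. cnj (fX X (k1,k2) p) * R$p$q * fX X (k1,k2) q)"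
      by (rule sum_pair)
    also have "\<dots> = (\<Sum>k1\<in>UNIV. (if snd p = snd q then R$p$q * (cnj (X$fst p$k1) * X$fst q$k1) else 0))"
      unfolding pt by (simp add: sum.delta)
    also have "\<dots> = (if snd p = snd q then R$p$q * S (fst p) (fst q) else 0)"
      by (simp add: S_def sum_distrib_left)
    finally show ?thesis .
  qed
  have "(\<Sum>k\<in>UNIV. bf R (fX X k) (fX X k)) = (\<Sum>k\<in>UNIV. \<Sum>p\<in>UNIV. \<Sum>q\<in>UNIV. cnj (fX X k p) * R$p$q * fX X k q)"
    by (simp add: bf_def)
  also have "\<dots> = (\<Sum>p\<in>UNIV. \<Sum>k\<in>UNIV. \<Sum>q\<in>UNIV. cnj (fX X k p) * R$p$q * fX X k q)"
    by (rule sum.swap)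
  also have "\<dots> = (\<Sum>p\<in>UNIV. \<Sum>q\<in>UNIV. \<Sum>k\<in>UNIV. cnj (fX X k p) * R$p$q * fX X k q)"
    by (rule sum.cong[OF refl], rule sum.swap)
  also have "\<dots> = (\<Sum>p\<in>UNIV. \<Sum>q\<in>UNIV. (if snd p = snd q then R$p$q * S (fst p) (fst q) else 0))"
    by (simp only: inner)
  also have "\<dots> = (\<Sum>a\<in>UNIV. \<Sum>b\<in>UNIV. \<Sum>a'\<in>UNIV. \<Sum>b'\<in>UNIV. (if b = b' then R$(a,b)$(a',b') * S a a' else 0))"
    by (simp only: sum_pair fst_conv snd_conv)
  also have "\<dots> = (\<Sum>a\<in>UNIV. \<Sum>b\<in>UNIV. \<Sum>a'\<in>UNIV. R$(a,b)$(a',b) * S a a')"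
    by (simp add: sum.delta)
  also have "\<dots> = (\<Sum>a\<in>UNIV. \<Sum>a'\<in>UNIV. \<Sum>b\<in>UNIV. R$(a,b)$(a',b) * S a a')"
    by (rule sum.cong[OF refl], rule sum.swap)
  also have "\<dots> = mtrace (ptrB R ** (X ** madj X))"
    unfolding mtrace_mult
    by (simp add: ptrB_def madj_def matrix_matrix_mult_def S_def sum_distrib_right mult.commute)
  finally show ?thesis by (rule sym)
qed

lemma I3: "mtrace (ptrA R ** ((Y::complex^'b^'b) ** madj Y)) =
   (\<Sum>k\<in>(UNIV::('a::finite\<times>'b::finite) set). bf R (gY Y k) (gY Y k))"
proof -
  define S where "S b b' = (\<Sum>k2\<in>UNIV. cnj (Y$b$k2) * Y$b'$k2)" for b b'
  have inner: "(\<Sum>k\<in>UNIV. cnj (gY Y k p) * R$p$q * gY Y k q) = (if fst p = fst q then R$p$q * S (snd p) (snd q) else 0)"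
    for p q :: "'a \<times> 'b"
  proof -
    have pt: "\<And>k1 k2. cnj (gY Y (k1,k2) p) * R$p$q * gY Y (k1,k2) q =
       (if k1 = fst p then (if fst p = fst q then R$p$q * (cnj (Y$snd p$k2) * Y$snd q$k2) else 0) else 0)"
      by (auto simp: gY_def)
    have "(\<Sum>k\<in>UNIV. cnj (gY Y k p) * R$p$q * gY Y k q) =
       (\<Sum>k1\<in>UNIV. \<Sum>k2\<in>UNIV. cnj (gY Y (k1,k2) p) * R$p$q * gY Y (k1,k2) q)"
      by (rule sum_pair)
    also have "\<dots> = (\<Sum>k2\<in>UNIV. \<Sum>k1\<in>UNIV. cnj (gY Y (k1,k2) p) * R$p$q * gY Y (k1,k2) q)"
      by (rule sum.swap)
    also have "\<dots> = (\<Sum>k2\<in>UNIV. (if fst p = fst q then R$p$q * (cnj (Y$snd p$k2) * Y$snd q$k2) else 0))"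
      unfolding pt by (simp add: sum.delta)
    also have "\<dots> = (if fst p = fst q then R$p$q * S (snd p) (snd q) else 0)"
      by (simp add: S_def sum_distrib_left)
    finally show ?thesis .
  qed
  have d: "\<And>a b. (\<Sum>a'\<in>UNIV. \<Sum>b'\<in>UNIV. (if a = a' then R$(a,b)$(a',b') * S b b' else 0)) =
        (\<Sum>b'\<in>UNIV. R$(a,b)$(a,b') * S b b')"
  proof -
    fix a b
    have "(\<Sum>a'\<in>UNIV. \<Sum>b'\<in>UNIV. (if a = a' then R$(a,b)$(a',b') * S b b' else 0)) =
          (\<Sum>b'\<in>UNIV. \<Sum>a'\<in>UNIV. (if a = a' then R$(a,b)$(a',b') * S b b' else 0))"
      by (rule sum.swap)
    then show "(\<Sum>a'\<in>UNIV. \<Sum>b'\<in>UNIV. (if a = a' then R$(a,b)$(a',b') * S b b' else 0)) =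
        (\<Sum>b'\<in>UNIV. R$(a,b)$(a,b') * S b b')" by (simp add: sum.delta)
  qed
  have "(\<Sum>k\<in>UNIV. bf R (gY Y k) (gY Y k)) = (\<Sum>k\<in>UNIV. \<Sum>p\<in>UNIV. \<Sum>q\<in>UNIV. cnj (gY Y k p) * R$p$q * gY Y k q)"
    by (simp add: bf_def)
  also have "\<dots> = (\<Sum>p\<in>UNIV. \<Sum>k\<in>UNIV. \<Sum>q\<in>UNIV. cnj (gY Y k p) * R$p$q * gY Y k q)"
    by (rule sum.swap)
  also have "\<dots> = (\<Sum>p\<in>UNIV. \<Sum>q\<in>UNIV. \<Sum>k\<in>UNIV. cnj (gY Y k p) * R$p$q * gY Y k q)"
    by (rule sum.cong[OF refl], rule sum.swap)
  also have "\<dots> = (\<Sum>p\<in>UNIV. \<Sum>q\<in>UNIV. (if fst p = fst q then R$p$q * S (snd p) (snd q) else 0))"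
    by (simp only: inner)
  also have "\<dots> = (\<Sum>a\<in>UNIV. \<Sum>b\<in>UNIV. \<Sum>a'\<in>UNIV. \<Sum>b'\<in>UNIV. (if a = a' then R$(a,b)$(a',b') * S b b' else 0))"
    by (simp only: sum_pair fst_conv snd_conv)
  also have "\<dots> = (\<Sum>a\<in>UNIV. \<Sum>b\<in>UNIV. \<Sum>b'\<in>UNIV. R$(a,b)$(a,b') * S b b')"
    by (simp only: d)
  also have "\<dots> = (\<Sum>b\<in>UNIV. \<Sum>a\<in>UNIV. \<Sum>b'\<in>UNIV. R$(a,b)$(a,b') * S b b')"
    by (rule sum.swap)
  also have "\<dots> = (\<Sum>b\<in>UNIV. \<Sum>b'\<in>UNIV. \<Sum>a\<in>UNIV. R$(a,b)$(a,b') * S b b')"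
    by (rule sum.cong[OF refl], rule sum.swap)
  also have "\<dots> = mtrace (ptrA R ** (Y ** madj Y))"
    unfolding mtrace_mult
    by (simp add: ptrA_def madj_def matrix_matrix_mult_def S_def sum_distrib_right mult.commute)
  finally show ?thesis by (rule sym)
qed



lemma mat_tendstoI:
  fixes A :: "nat \<Rightarrow> complex^'n^'m"
  assumes "\<And>i j. ((\<lambda>n. A n $ i $ j) \<longlongrightarrow> B $ i $ j) F"
  shows "(A \<longlongrightarrow> B) F"
  by (intro vec_tendstoI) (use assms in auto)

lemma mat_nth_tendsto:
  fixes A :: "nat \<Rightarrow> complex^'n^'m"
  assumes "(A \<longlongrightarrow> B) F"
  shows "((\<lambda>n. A n $ i $ j) \<longlongrightarrow> B $ i $ j) F"
  by (intro tendsto_vec_nth assms)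

lemma mmult_tendsto:
  fixes A :: "nat \<Rightarrow> complex^'n^'m" and B :: "nat \<Rightarrow> complex^'k^'n"
  assumes "(A \<longlongrightarrow> A0) F" "(B \<longlongrightarrow> B0) F"
  shows "((\<lambda>n. A n ** B n) \<longlongrightarrow> A0 ** B0) F"
  unfolding matrix_matrix_mult_def
  by (intro mat_tendstoI) (simp, intro tendsto_intros mat_nth_tendsto assms)

lemma madj_tendsto:
  fixes A :: "nat \<Rightarrow> complex^'n^'n"
  assumes "(A \<longlongrightarrow> A0) F"
  shows "((\<lambda>n. madj (A n)) \<longlongrightarrow> madj A0) F"
  unfolding madj_def
  by (intro mat_tendstoI) (simp, intro tendsto_intros mat_nth_tendsto assms)

lemma mtrace_tendsto:
  fixes A :: "nat \<Rightarrow> complex^'n^'n"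
  assumes "(A \<longlongrightarrow> A0) F"
  shows "((\<lambda>n. mtrace (A n)) \<longlongrightarrow> mtrace A0) F"
  unfolding mtrace_def
  by (intro tendsto_intros mat_nth_tendsto assms)

lemma mtensor_tendsto:
  fixes A :: "nat \<Rightarrow> complex^'a^'a" and B :: "nat \<Rightarrow> complex^'b^'b"
  assumes "(A \<longlongrightarrow> A0) F" "(B \<longlongrightarrow> B0) F"
  shows "((\<lambda>n. mtensor (A n) (B n)) \<longlongrightarrow> mtensor A0 B0) F"
  unfolding mtensor_def
  by (intro mat_tendstoI) (simp, intro tendsto_intros mat_nth_tendsto assms)

lemma ptrB_tendsto:
  fixes A :: "nat \<Rightarrow> complex^('a::finite\<times>'b::finite)^('a\<times>'b)"
  assumes "(A \<longlongrightarrow> A0) F"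
  shows "((\<lambda>n. ptrB (A n)) \<longlongrightarrow> ptrB A0) F"
  unfolding ptrB_def
  by (intro mat_tendstoI) (simp, intro tendsto_intros mat_nth_tendsto assms)

lemma ptrA_tendsto:
  fixes A :: "nat \<Rightarrow> complex^('a::finite\<times>'b::finite)^('a\<times>'b)"
  assumes "(A \<longlongrightarrow> A0) F"
  shows "((\<lambda>n. ptrA (A n)) \<longlongrightarrow> ptrA A0) F"
  unfolding ptrA_def
  by (intro mat_tendstoI) (simp, intro tendsto_intros mat_nth_tendsto assms)

definition msc :: "complex \<Rightarrow> complex^'n^'m \<Rightarrow> complex^'n^'m" where
  "msc c M = (\<chi> i j. c * M$i$j)"

lemma mtrace_msc: "mtrace (A ** msc c B) = c * mtrace (A ** B)"
  unfolding mtrace_mult by (simp add: msc_def sum_distrib_left algebra_simps)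

lemma msc_madj: "msc c B ** madj (msc c B) = msc (c * cnj c) (B ** madj B)"
  unfolding msc_def madj_def matrix_matrix_mult_def
  by (simp add: vec_eq_iff sum_distrib_left algebra_simps)

lemma mtrace_ptrB: "mtrace (ptrB R) = mtrace R"
  unfolding mtrace_def ptrB_def using sum_pair[of "\<lambda>i. R$i$i"] by simp

lemma mtrace_ptrA: "mtrace (ptrA R) = mtrace R"
proof -
  have "mtrace (ptrA R) = (\<Sum>b\<in>UNIV. \<Sum>a\<in>UNIV. R$(a,b)$(a,b))" unfolding mtrace_def ptrA_def by simp
  also have "\<dots> = (\<Sum>a\<in>UNIV. \<Sum>b\<in>UNIV. R$(a,b)$(a,b))" by (rule sum.swap)
  also have "\<dots> = mtrace R" unfolding mtrace_def using sum_pair[of "\<lambda>i. R$i$i"] by simp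
  finally show ?thesis .
qed

lemma msc_tendsto:
  fixes A :: "nat \<Rightarrow> complex^'n^'m"
  assumes "(c \<longlongrightarrow> c0) F" "(A \<longlongrightarrow> A0) F"
  shows "((\<lambda>n. msc (c n) (A n)) \<longlongrightarrow> msc c0 A0) F"
  unfolding msc_def
  by (intro mat_tendstoI) (simp, intro tendsto_intros mat_nth_tendsto assms)

lemma mtrace_diff: "mtrace (A - B) = mtrace A - mtrace B"
  unfolding mtrace_def by (simp add: sum_subtractf)

lemma matrix_sub_ldistrib': "(A::'a::ring_1^'n^'m) ** (B - C) = A ** B - A ** C"
  by (simp add: matrix_matrix_mult_def vec_eq_iff sum_subtractf algebra_simps)

lemma normalize:
  fixes M :: "nat \<Rightarrow> complex^'n^'n" and M0 X :: "complex^'n^'n"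
  assumes lim: "M \<longlonglongrightarrow> M0"
  and ev: "eventually (\<lambda>n. mtrace (M n) = 1 \<and> (\<forall>Z. Im (mtrace (M n ** (Z ** madj Z))) = 0)) sequentially"
  and c0: "mtrace (M0 ** X) = 0" and v1: "mtrace (M0 ** (X ** madj X)) = 1"
  shows "\<exists>Xs. Xs \<longlonglongrightarrow> X \<and> eventually (\<lambda>n. mtrace (M n ** Xs n) = 0 \<and> mtrace (M n ** (Xs n ** madj (Xs n))) = 1) sequentially"
proof -
  define c where "c n = mtrace (M n ** X)" for n
  define Z where "Z n = X - msc (c n) (mat 1)" for n
  define v where "v n = mtrace (M n ** (Z n ** madj (Z n)))" for n
  define Xs where "Xs n = msc (of_real (1 / sqrt (Re (v n)))) (Z n)" for n
  have cl: "c \<longlonglongrightarrow> 0" unfolding c_def[abs_def]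
    using mtrace_tendsto[OF mmult_tendsto[OF lim tendsto_const[of X]]] c0 by simp
  have Zl: "Z \<longlonglongrightarrow> X"
  proof -
    have "(\<lambda>n. X - msc (c n) (mat 1)) \<longlonglongrightarrow> X - msc 0 (mat 1)"
      by (intro tendsto_intros msc_tendsto cl)
    moreover have "msc 0 (mat 1) = (0::complex^'n^'n)" by (simp add: msc_def vec_eq_iff)
    ultimately show ?thesis by (simp add: Z_def[abs_def])
  qed
  have vl: "v \<longlonglongrightarrow> 1" unfolding v_def[abs_def]
    using mtrace_tendsto[OF mmult_tendsto[OF lim mmult_tendsto[OF Zl madj_tendsto[OF Zl]]]] v1 by simp
  have rvl: "(\<lambda>n. Re (v n)) \<longlonglongrightarrow> 1" using tendsto_Re[OF vl] by simp
  have evpos: "eventually (\<lambda>n. Re (v n) > 0) sequentially"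
    using order_tendstoD(1)[OF rvl, of 0] by simp
  have "(\<lambda>n. msc (of_real (1 / sqrt (Re (v n)))) (Z n)) \<longlonglongrightarrow> msc (of_real (1 / sqrt 1)) X"
    by (intro msc_tendsto tendsto_intros rvl Zl) simp
  then have Xl: "Xs \<longlonglongrightarrow> X" by (simp add: Xs_def[abs_def] msc_def)
  have "eventually (\<lambda>n. mtrace (M n ** Xs n) = 0 \<and> mtrace (M n ** (Xs n ** madj (Xs n))) = 1) sequentially"
    using ev evpos
  proof eventually_elim
    case (elim n)
    then have tr: "mtrace (M n) = 1" and im: "Im (v n) = 0" and pos: "Re (v n) > 0"
      unfolding v_def by auto
    have "mtrace (M n ** Z n) = c n - c n * mtrace (M n)"
      unfolding Z_def by (simp add: matrix_sub_ldistrib' mtrace_diff mtrace_msc c_def)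
    then have z0: "mtrace (M n ** Z n) = 0" using tr by simp
    have vr: "v n = of_real (Re (v n))" using im by (simp add: complex_eq_iff)
    define k where "k = (of_real (1 / sqrt (Re (v n))) :: complex)"
    have ck: "cnj k = k" by (simp add: k_def)
    have rr: "(1 / sqrt (Re (v n))) * (1 / sqrt (Re (v n))) * Re (v n) = 1"
      using pos real_sqrt_mult_self[of "Re (v n)"] by simp
    have kk: "k * cnj k * v n = 1"
      unfolding ck
    proof -
      have "k * k * v n = of_real ((1 / sqrt (Re (v n))) * (1 / sqrt (Re (v n))) * Re (v n))"
        by (subst vr) (simp only: k_def of_real_mult)
      then show "k * k * v n = 1" using rr by simp
    qed
    show ?case
      using z0 kk unfolding Xs_def k_def[symmetric]
      by (simp add: mtrace_msc msc_madj v_def)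
  qed
  with Xl show ?thesis by blast
qed



lemma vA_real:
  assumes "density R"
  shows "mtrace (ptrB R ** (X ** madj X)) = of_real (Re (mtrace (ptrB R ** (X ** madj X))))
     \<and> Re (mtrace (ptrB R ** (X ** madj X))) \<ge> 0"
proof -
  let ?f = "\<lambda>k. bf R (fX X k) (fX X k)"
  have "Im (sum ?f UNIV) = 0" unfolding Im_sum using bf_psd[OF assms] by simp
  moreover have "Re (sum ?f UNIV) \<ge> 0" unfolding Re_sum using bf_psd[OF assms] by (simp add: sum_nonneg)
  ultimately show ?thesis unfolding I2[where 'b='b] by (simp add: complex_eq_iff)
qed

lemma vB_real:
  assumes "density (R::complex^('a::finite\<times>'b::finite)^('a\<times>'b))"
  shows "mtrace (ptrA R ** (Y ** madj Y)) = of_real (Re (mtrace (ptrA R ** (Y ** madj Y))))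
     \<and> Re (mtrace (ptrA R ** (Y ** madj Y))) \<ge> 0"
proof -
  let ?f = "\<lambda>k::'a\<times>'b. bf R (gY Y k) (gY Y k)"
  have "Im (sum ?f UNIV) = 0" unfolding Im_sum using bf_psd[OF assms] by simp
  moreover have "Re (sum ?f UNIV) \<ge> 0" unfolding Re_sum using bf_psd[OF assms] by (simp add: sum_nonneg)
  ultimately show ?thesis unfolding I3[where 'a='a] by (simp add: complex_eq_iff)
qed

lemma TT_bound:
  assumes "density (R::complex^('a::finite\<times>'b::finite)^('a\<times>'b))"
  shows "2 * cmod (mtrace (R ** mtensor X (madj Y))) \<le>
     Re (mtrace (ptrB R ** (X ** madj X))) + Re (mtrace (ptrA R ** (Y ** madj Y)))"
proof -
  have "2 * cmod (mtrace (R ** mtensor X (madj Y))) \<le> 2 * (\<Sum>k\<in>UNIV. cmod (bf R (fX X k) (gY Y k)))"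
    unfolding I1 using norm_sum by (intro mult_left_mono) auto
  also have "\<dots> = (\<Sum>k\<in>UNIV. 2 * cmod (bf R (fX X k) (gY Y k)))" by (simp add: sum_distrib_left)
  also have "\<dots> \<le> (\<Sum>k\<in>UNIV. Re (bf R (fX X k) (fX X k)) + Re (bf R (gY Y k) (gY Y k)))"
    by (intro sum_mono bf_amgm assms)
  also have "\<dots> = Re (mtrace (ptrB R ** (X ** madj X))) + Re (mtrace (ptrA R ** (Y ** madj Y)))"
    unfolding I2[where 'b='b] I3[where 'a='a] by (simp add: Re_sum sum.distrib)
  finally show ?thesis .
qed

lemma maxcorr_upper:
  assumes "density R"
    and "mtrace (ptrB R ** X) = 0" "mtrace (ptrA R ** Y) = 0"
    "mtrace (ptrB R ** (X ** madj X)) = 1" "mtrace (ptrA R ** (Y ** madj Y)) = 1"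
  shows "cmod (mtrace (R ** mtensor X (madj Y))) \<le> maxcorr R"
proof -
  have bd: "bdd_above ({cmod (mtrace (R ** mtensor X (madj Y))) | X Y.
        mtrace (ptrB R ** X) = 0 \<and> mtrace (ptrA R ** Y) = 0 \<and>
        mtrace (ptrB R ** (X ** madj X)) = 1 \<and> mtrace (ptrA R ** (Y ** madj Y)) = 1} \<union> {0})"
  proof (rule bdd_aboveI[where M=1], elim UnE)
    fix x assume "x \<in> {cmod (mtrace (R ** mtensor X (madj Y))) | X Y.
        mtrace (ptrB R ** X) = 0 \<and> mtrace (ptrA R ** Y) = 0 \<and>
        mtrace (ptrB R ** (X ** madj X)) = 1 \<and> mtrace (ptrA R ** (Y ** madj Y)) = 1}"
    then obtain X Y where x: "x = cmod (mtrace (R ** mtensor X (madj Y)))"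
      and h: "mtrace (ptrB R ** (X ** madj X)) = 1" "mtrace (ptrA R ** (Y ** madj Y)) = 1" by blast
    show "x \<le> 1" using TT_bound[OF assms(1), of X Y] h x by simp
  qed simp
  show ?thesis unfolding maxcorr_def
    by (rule cSup_upper[OF _ bd]) (use assms in blast)
qed

lemma maxcorr_nonneg:
  assumes "density R" shows "0 \<le> maxcorr R"
proof -
  have bd: "bdd_above ({cmod (mtrace (R ** mtensor X (madj Y))) | X Y.
        mtrace (ptrB R ** X) = 0 \<and> mtrace (ptrA R ** Y) = 0 \<and>
        mtrace (ptrB R ** (X ** madj X)) = 1 \<and> mtrace (ptrA R ** (Y ** madj Y)) = 1} \<union> {0})"
  proof (rule bdd_aboveI[where M=1], elim UnE)
    fix x assume "x \<in> {cmod (mtrace (R ** mtensor X (madj Y))) | X Y.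
        mtrace (ptrB R ** X) = 0 \<and> mtrace (ptrA R ** Y) = 0 \<and>
        mtrace (ptrB R ** (X ** madj X)) = 1 \<and> mtrace (ptrA R ** (Y ** madj Y)) = 1}"
    then obtain X Y where x: "x = cmod (mtrace (R ** mtensor X (madj Y)))"
      and h: "mtrace (ptrB R ** (X ** madj X)) = 1" "mtrace (ptrA R ** (Y ** madj Y)) = 1" by blast
    show "x \<le> 1" using TT_bound[OF assms(1), of X Y] h x by simp
  qed simp
  show ?thesis unfolding maxcorr_def
    by (rule cSup_upper[OF _ bd]) simp
qed

lemma density_limit:
  fixes \<sigma> :: "nat \<Rightarrow> complex^'n^'n"
  assumes ev: "eventually (\<lambda>n. density (\<sigma> n)) sequentially" and lim: "\<sigma> \<longlonglongrightarrow> \<rho>"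
  shows "density \<rho>"
proof -
  have "(\<lambda>n. madj (\<sigma> n)) \<longlonglongrightarrow> madj \<rho>" by (rule madj_tendsto[OF lim])
  moreover have "eventually (\<lambda>n. madj (\<sigma> n) = \<sigma> n) sequentially"
    using ev by eventually_elim (simp add: density_def)
  ultimately have "\<sigma> \<longlonglongrightarrow> madj \<rho>" by (rule Lim_transform_eventually)
  then have h: "madj \<rho> = \<rho>" using lim LIMSEQ_unique by blast
  have tr: "mtrace \<rho> = 1"
  proof -
    have "(\<lambda>n. mtrace (\<sigma> n)) \<longlonglongrightarrow> mtrace \<rho>" by (rule mtrace_tendsto[OF lim])
    moreover have "eventually (\<lambda>n. mtrace (\<sigma> n) = 1) sequentially"
      using ev by eventually_elim (simp add: density_def)
    ultimately have "(\<lambda>n. 1) \<longlonglongrightarrow> mtrace \<rho>" by (rule Lim_transform_eventually)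
    then show ?thesis using LIMSEQ_unique tendsto_const by metis
  qed
  have q: "let q = (\<Sum>i\<in>UNIV. \<Sum>j\<in>UNIV. cnj (v $ i) * \<rho> $ i $ j * v $ j) in Im q = 0 \<and> Re q \<ge> 0"
    for v :: "complex^'n"
  proof -
    define qn where "qn n = (\<Sum>i\<in>UNIV. \<Sum>j\<in>UNIV. cnj (v $ i) * \<sigma> n $ i $ j * v $ j)" for n
    define q where "q = (\<Sum>i\<in>UNIV. \<Sum>j\<in>UNIV. cnj (v $ i) * \<rho> $ i $ j * v $ j)"
    have ql: "qn \<longlonglongrightarrow> q" unfolding qn_def[abs_def] q_def
      by (intro tendsto_intros mat_nth_tendsto lim)
    have evq: "eventually (\<lambda>n. Im (qn n) = 0 \<and> Re (qn n) \<ge> 0) sequentially"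
      using ev by eventually_elim (simp add: density_def qn_def Let_def)
    have "(\<lambda>n. Im (qn n)) \<longlonglongrightarrow> Im q" by (intro tendsto_intros ql)
    moreover have "eventually (\<lambda>n. Im (qn n) = 0) sequentially" using evq by eventually_elim simp
    ultimately have "(\<lambda>n. 0) \<longlonglongrightarrow> Im q" by (rule Lim_transform_eventually)
    then have "Im q = 0" using LIMSEQ_unique tendsto_const by metis
    moreover have "Re q \<ge> 0"
    proof (rule tendsto_lowerbound)
      show "(\<lambda>n. Re (qn n)) \<longlonglongrightarrow> Re q" by (intro tendsto_intros ql)
      show "eventually (\<lambda>n. 0 \<le> Re (qn n)) sequentially" using evq by eventually_elim simp
    qed simp
    ultimately show ?thesis by (simp add: q_def Let_def)
  qed
  show ?thesis unfolding density_def using h tr q by blast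
qed



lemma TT_expand: "mtrace (R ** mtensor X (madj Y)) =
   (\<Sum>p\<in>UNIV. \<Sum>q\<in>UNIV. R$p$q * (X$fst q$fst p * cnj (Y$snd p$snd q)))"
  unfolding mtrace_mult by (simp add: mtensor_def madj_def)

lemma TT_mscX: "mtrace (R ** mtensor (msc c X) (madj Y)) = c * mtrace (R ** mtensor X (madj Y))"
  unfolding TT_expand by (simp add: msc_def sum_distrib_left algebra_simps)
lemma TT_mscY: "mtrace (R ** mtensor X (madj (msc c Y))) = cnj c * mtrace (R ** mtensor X (madj Y))"
  unfolding TT_expand by (simp add: msc_def sum_distrib_left algebra_simps)
lemma TT_diffX: "mtrace (R ** mtensor (X1 - X2) (madj Y)) = mtrace (R ** mtensor X1 (madj Y)) - mtrace (R ** mtensor X2 (madj Y))"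
  unfolding TT_expand by (simp add: algebra_simps sum_subtractf)
lemma TT_diffY: "mtrace (R ** mtensor X (madj (Y1 - Y2))) = mtrace (R ** mtensor X (madj Y1)) - mtrace (R ** mtensor X (madj Y2))"
  unfolding TT_expand by (simp add: algebra_simps sum_subtractf)

lemma v_msc: "mtrace (A ** (msc c X ** madj (msc c X))) = c * cnj c * mtrace (A ** (X ** madj X))"
  by (simp add: msc_madj mtrace_msc)

lemma inv_sqrt_sq: "(r::real) > 0 \<Longrightarrow> of_real (1 / sqrt r) * cnj (of_real (1 / sqrt r)) * (of_real r :: complex) = 1"
proof -
  assume pos: "r > 0"
  have rr: "(1 / sqrt r) * (1 / sqrt r) * r = 1"
    using pos real_sqrt_mult_self[of r] by simp
  have "of_real (1 / sqrt r) * cnj (of_real (1 / sqrt r)) * (of_real r :: complex) = of_real ((1 / sqrt r) * (1 / sqrt r) * r)"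
    by (simp only: complex_cnj_complex_of_real of_real_mult)
  then show ?thesis using rr by simp
qed

lemma zeroall:
  fixes R :: "complex^('a::finite\<times>'b::finite)^('a\<times>'b)"
  assumes d: "density R"
  and H: "\<And>X Y. mtrace (ptrB R ** X) = 0 \<Longrightarrow> mtrace (ptrA R ** Y) = 0 \<Longrightarrow>
     mtrace (ptrB R ** (X ** madj X)) = 1 \<Longrightarrow> mtrace (ptrA R ** (Y ** madj Y)) = 1 \<Longrightarrow>
     mtrace (R ** mtensor X (madj Y)) = 0"
  and cX: "mtrace (ptrB R ** X) = 0" and cY: "mtrace (ptrA R ** Y) = 0"
  shows "mtrace (R ** mtensor X (madj Y)) = 0"
proof -
  define a where "a = Re (mtrace (ptrB R ** (X ** madj X)))"
  define b where "b = Re (mtrace (ptrA R ** (Y ** madj Y)))"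
  have va: "mtrace (ptrB R ** (X ** madj X)) = of_real a" "a \<ge> 0" using vA_real[OF d, of X] a_def by auto
  have vb: "mtrace (ptrA R ** (Y ** madj Y)) = of_real b" "b \<ge> 0" using vB_real[OF d, of Y] b_def by auto
  let ?T = "mtrace (R ** mtensor X (madj Y))"
  consider "a > 0" "b > 0" | "a = 0" | "b = 0" using va(2) vb(2) by linarith
  then show ?thesis
  proof cases
    case 1
    define ka where "ka = (of_real (1 / sqrt a) :: complex)"
    define kb where "kb = (of_real (1 / sqrt b) :: complex)"
    have kaa: "ka * cnj ka * of_real a = 1" unfolding ka_def by (rule inv_sqrt_sq[OF 1(1)])
    have kbb: "kb * cnj kb * of_real b = 1" unfolding kb_def by (rule inv_sqrt_sq[OF 1(2)])
    have "mtrace (R ** mtensor (msc ka X) (madj (msc kb Y))) = 0"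
      by (rule H) (simp_all add: mtrace_msc v_msc va vb kaa kbb cX cY)
    then have "cnj kb * (ka * ?T) = 0" by (simp only: TT_mscX TT_mscY)
    moreover have "ka \<noteq> 0" "kb \<noteq> 0" using 1 by (auto simp: ka_def kb_def)
    ultimately show ?thesis by simp
  next
    case 2
    show ?thesis
    proof (rule ccontr)
      assume ne: "?T \<noteq> 0"
      define s where "s = (b + 1) / cmod ?T"
      have s0: "s \<ge> 0" using vb(2) by (simp add: s_def)
      have "2 * cmod (mtrace (R ** mtensor (msc (of_real s) X) (madj Y))) \<le>
        Re (mtrace (ptrB R ** (msc (of_real s) X ** madj (msc (of_real s) X)))) + Re (mtrace (ptrA R ** (Y ** madj Y)))"
        by (rule TT_bound[OF d])
      also have "\<dots> = b" unfolding v_msc va vb 2 by simp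
      finally have "2 * (s * cmod ?T) \<le> b" unfolding TT_mscX norm_mult using s0 by simp
      moreover have "s * cmod ?T = b + 1" using ne by (simp add: s_def)
      ultimately show False using vb(2) by simp
    qed
  next
    case 3
    show ?thesis
    proof (rule ccontr)
      assume ne: "?T \<noteq> 0"
      define s where "s = (a + 1) / cmod ?T"
      have s0: "s \<ge> 0" using va(2) by (simp add: s_def)
      have "2 * cmod (mtrace (R ** mtensor X (madj (msc (of_real s) Y)))) \<le>
        Re (mtrace (ptrB R ** (X ** madj X))) + Re (mtrace (ptrA R ** (msc (of_real s) Y ** madj (msc (of_real s) Y))))"
        by (rule TT_bound[OF d])
      also have "\<dots> = a" unfolding v_msc va vb 3 by simp
      finally have "2 * (s * cmod ?T) \<le> a" unfolding TT_mscY norm_mult using s0 by simp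
      moreover have "s * cmod ?T = a + 1" using ne by (simp add: s_def)
      ultimately show False using va(2) by simp
    qed
  qed
qed

lemma sum_if_const: "(\<Sum>x\<in>A. if P then f x else 0) = (if P then sum f A else 0)"
  by simp

lemma mtrace_unit: "mtrace (A ** (\<chi> i j. if i = u \<and> j = w then 1 else 0)) = (A $ w $ u :: complex)"
proof -
  have pt: "\<And>i j. A$i$j * (\<chi> i j. if i = u \<and> j = w then 1 else 0)$j$i = (if j = u then (if i = w then A$w$u else 0) else 0)"
    by auto
  show ?thesis unfolding mtrace_mult pt by (simp add: sum.delta)
qed

lemma product_from_zero:
  fixes R :: "complex^('a::finite\<times>'b::finite)^('a\<times>'b)"
  assumes d: "density R"
  and Z: "\<And>X Y. mtrace (ptrB R ** X) = 0 \<Longrightarrow> mtrace (ptrA R ** Y) = 0 \<Longrightarrow>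
     mtrace (R ** mtensor X (madj Y)) = 0"
  shows "R = mtensor (ptrB R) (ptrA R)"
proof -
  have tr1: "mtrace R = 1" using d by (simp add: density_def)
  have ent: "R $ (a,b) $ (a',b') = ptrB R $ a $ a' * ptrA R $ b $ b'" for a a' b b'
  proof -
    define E where "E = (\<chi> i j. if i = a' \<and> j = a then (1::complex) else 0)"
    define F where "F = (\<chi> i j. if i = b \<and> j = b' then (1::complex) else 0)"
    define c where "c = ptrB R $ a $ a'"
    define e where "e = ptrA R $ b' $ b"
    define I1 where "I1 = (mat 1 :: complex^'a^'a)"
    define I2 where "I2 = (mat 1 :: complex^'b^'b)"
    have cX: "mtrace (ptrB R ** (E - msc c I1)) = 0"
      unfolding matrix_sub_ldistrib' mtrace_diff mtrace_msc E_def I1_def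
      by (simp add: mtrace_unit mtrace_ptrB tr1 c_def)
    have cY: "mtrace (ptrA R ** (F - msc e I2)) = 0"
      unfolding matrix_sub_ldistrib' mtrace_diff mtrace_msc F_def I2_def
      by (simp add: mtrace_unit mtrace_ptrA tr1 e_def)
    have EF: "mtrace (R ** mtensor E (madj F)) = R $ (a,b) $ (a',b')"
    proof -
      have pt: "\<And>p q. R$p$q * (E$fst q$fst p * cnj (F$snd p$snd q)) =
         (if q = (a',b') then (if p = (a,b) then R$p$q else 0) else 0)"
        by (auto simp: E_def F_def)
      show ?thesis unfolding TT_expand pt by (simp add: sum.delta)
    qed
    have EI: "mtrace (R ** mtensor E (madj I2)) = ptrB R $ a $ a'"
    proof -
      have pt: "\<And>p q. R$p$q * (E$fst q$fst p * cnj (I2$snd p$snd q)) =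
         (if q = (a', snd p) then (if fst p = a then R$p$q else 0) else 0)"
        by (auto simp: E_def I2_def mat_def)
      have "mtrace (R ** mtensor E (madj I2)) = (\<Sum>p\<in>UNIV. if fst p = a then R$p$(a', snd p) else 0)"
        unfolding TT_expand pt by (simp add: sum.delta)
      also have "\<dots> = (\<Sum>a1\<in>UNIV. \<Sum>b1\<in>UNIV. if a1 = a then R$(a1,b1)$(a', b1) else 0)"
        by (simp only: sum_pair fst_conv snd_conv)
      also have "\<dots> = ptrB R $ a $ a'"
        by (simp only: sum_if_const) (simp add: sum.delta ptrB_def)
      finally show ?thesis .
    qed
    have IF: "mtrace (R ** mtensor I1 (madj F)) = ptrA R $ b $ b'"
    proof -
      have pt: "\<And>p q. R$p$q * (I1$fst q$fst p * cnj (F$snd p$snd q)) =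
         (if q = (fst p, b') then (if snd p = b then R$p$q else 0) else 0)"
        by (auto simp: F_def I1_def mat_def)
      have "mtrace (R ** mtensor I1 (madj F)) = (\<Sum>p\<in>UNIV. if snd p = b then R$p$(fst p, b') else 0)"
        unfolding TT_expand pt by (simp add: sum.delta)
      also have "\<dots> = (\<Sum>a1\<in>UNIV. \<Sum>b1\<in>UNIV. if b1 = b then R$(a1,b1)$(a1, b') else 0)"
        by (simp only: sum_pair fst_conv snd_conv)
      also have "\<dots> = ptrA R $ b $ b'"
        by (simp add: sum.delta ptrA_def)
      finally show ?thesis .
    qed
    have II: "mtrace (R ** mtensor I1 (madj I2)) = 1"
    proof -
      have pt: "\<And>p q. R$p$q * (I1$fst q$fst p * cnj (I2$snd p$snd q)) =
         (if q = p then R$p$p else 0)"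
        by (auto simp: I1_def I2_def mat_def prod_eq_iff)
      show ?thesis unfolding TT_expand pt using tr1 by (simp add: sum.delta mtrace_def)
    qed
    have "mtrace (R ** mtensor (E - msc c I1) (madj (F - msc e I2))) = 0"
      by (rule Z[OF cX cY])
    then have "R $ (a,b) $ (a',b') - cnj e * c - c * (ptrA R $ b $ b' - cnj e * 1) = 0"
      unfolding TT_diffX TT_diffY TT_mscX TT_mscY EF EI IF II c_def by (simp add: algebra_simps)
    then show ?thesis unfolding c_def by (simp add: algebra_simps)
  qed
  show ?thesis
    by (simp add: vec_eq_iff mtensor_def ent split: prod.splits)
qed

theorem lemma2:
  fixes \<sigma> :: "nat \<Rightarrow> complex^('a::finite \<times> 'b::finite)^('a \<times> 'b)"
    and \<rho> :: "complex^('a \<times> 'b)^('a \<times> 'b)"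
    and lam :: real
  assumes "\<forall>n\<ge>1. density (\<sigma> n)"
    and "\<sigma> \<longlonglongrightarrow> \<rho>"
    and "(\<lambda>n. maxcorr (\<sigma> n)) \<longlonglongrightarrow> lam"
  shows "maxcorr \<rho> \<le> lam \<and> (lam = 0 \<longrightarrow> \<rho> = mtensor (ptrB \<rho>) (ptrA \<rho>))"
proof -
  have dens: "eventually (\<lambda>n. density (\<sigma> n)) sequentially"
    using assms(1) eventually_sequentially by blast
  note lim = assms(2) and mlim = assms(3)
  have lam0: "0 \<le> lam"
  proof (rule tendsto_lowerbound[OF mlim])
    show "eventually (\<lambda>n. 0 \<le> maxcorr (\<sigma> n)) sequentially"
      using dens by eventually_elim (rule maxcorr_nonneg)
  qed simp
  have key: "cmod (mtrace (\<rho> ** mtensor X (madj Y))) \<le> lam"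
    if f: "mtrace (ptrB \<rho> ** X) = 0" "mtrace (ptrA \<rho> ** Y) = 0"
      "mtrace (ptrB \<rho> ** (X ** madj X)) = 1" "mtrace (ptrA \<rho> ** (Y ** madj Y)) = 1" for X Y
  proof -
    have evA: "eventually (\<lambda>n. mtrace (ptrB (\<sigma> n)) = 1 \<and> (\<forall>Z. Im (mtrace (ptrB (\<sigma> n) ** (Z ** madj Z))) = 0)) sequentially"
      using dens
    proof eventually_elim
      case (elim n)
      then show ?case using vA_real[OF elim] by (simp add: mtrace_ptrB density_def) (metis Im_complex_of_real)
    qed
    have evB: "eventually (\<lambda>n. mtrace (ptrA (\<sigma> n)) = 1 \<and> (\<forall>Z. Im (mtrace (ptrA (\<sigma> n) ** (Z ** madj Z))) = 0)) sequentially"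
      using dens
    proof eventually_elim
      case (elim n)
      then show ?case using vB_real[OF elim] by (simp add: mtrace_ptrA density_def) (metis Im_complex_of_real)
    qed
    obtain Xs where Xl: "Xs \<longlonglongrightarrow> X" and Xev: "eventually (\<lambda>n. mtrace (ptrB (\<sigma> n) ** Xs n) = 0 \<and> mtrace (ptrB (\<sigma> n) ** (Xs n ** madj (Xs n))) = 1) sequentially"
      using normalize[OF ptrB_tendsto[OF lim] evA f(1) f(3)] by blast
    obtain Ys where Yl: "Ys \<longlonglongrightarrow> Y" and Yev: "eventually (\<lambda>n. mtrace (ptrA (\<sigma> n) ** Ys n) = 0 \<and> mtrace (ptrA (\<sigma> n) ** (Ys n ** madj (Ys n))) = 1) sequentially"
      using normalize[OF ptrA_tendsto[OF lim] evB f(2) f(4)] by blast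
    have Tl: "(\<lambda>n. cmod (mtrace (\<sigma> n ** mtensor (Xs n) (madj (Ys n))))) \<longlonglongrightarrow> cmod (mtrace (\<rho> ** mtensor X (madj Y)))"
      by (intro tendsto_norm mtrace_tendsto mmult_tendsto mtensor_tendsto madj_tendsto lim Xl Yl)
    show ?thesis
    proof (rule tendsto_le[OF _ mlim Tl])
      show "eventually (\<lambda>n. cmod (mtrace (\<sigma> n ** mtensor (Xs n) (madj (Ys n)))) \<le> maxcorr (\<sigma> n)) sequentially"
        using dens Xev Yev by eventually_elim (intro maxcorr_upper; simp)
    qed simp
  qed
  have part1: "maxcorr \<rho> \<le> lam"
    unfolding maxcorr_def
    by (rule cSup_least) (use key lam0 in auto)
  have part2: "\<rho> = mtensor (ptrB \<rho>) (ptrA \<rho>)" if l0: "lam = 0"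
  proof -
    have dr: "density \<rho>" by (rule density_limit[OF dens lim])
    have H: "mtrace (\<rho> ** mtensor X (madj Y)) = 0"
      if "mtrace (ptrB \<rho> ** X) = 0" "mtrace (ptrA \<rho> ** Y) = 0"
      "mtrace (ptrB \<rho> ** (X ** madj X)) = 1" "mtrace (ptrA \<rho> ** (Y ** madj Y)) = 1" for X Y
      using key[OF that] l0 by simp
    show ?thesis
      by (rule product_from_zero[OF dr]) (rule zeroall[OF dr H])
  qed
  show ?thesis using part1 part2 by blast
qed

end
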